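(* Let $\alpha\in(0,\pi/2]$ and let $I_1(\beta),I_2(\beta)$ be as defined in the context, for $\beta\in(\alpha,\pi)$. Then $(\cos\alpha-\cos\beta)^{1/2}I_1(\beta)$ is strictly decreasing and $(\cos\alpha-\cos\beta)^{1/2}I_2(\beta)$ is strictly increasing in $\beta$; $I_1>I_2$ for $\beta$ close to $\alpha$ and $I_1<I_2$ for $\beta$ close to $\pi$. Consequently there exists a unique $\beta^+\in(\alpha,\pi)$ with $I_1(\beta^+)=I_2(\beta^+)$.
   Context: For $\alpha\in(0,\pi/2]$ and $\beta\in(\alpha,\pi)$: $$I_1(\beta)=\int_0^\alpha\Big(\frac{\cos t-\cos\alpha}{\cos\alpha-\cos\beta}\Big)^{1/2}\frac{dt}{\cos t-\cos\beta},\qquad I_2(\beta)=\int_0^\alpha\Big(\frac{\cos\alpha-\cos\beta}{\cos t-\cos\alpha}\Big)^{1/2}\frac{dt}{\cos t-\cos\beta}.$$ *)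

theory Defs
  imports "HOL-Analysis.Analysis"
begin

text \<open>The integrals I_1(beta), I_2(beta) over [0, alpha] (Henstock-Kurzweil integral;
  the integrands are nonnegative, so this agrees with the (improper) Lebesgue integral).\<close>

definition I1 :: "real \<Rightarrow> real \<Rightarrow> real" where
  "I1 \<alpha> \<beta> = integral {0..\<alpha>}
     (\<lambda>t. sqrt ((cos t - cos \<alpha>) / (cos \<alpha> - cos \<beta>)) / (cos t - cos \<beta>))"

definition I2 :: "real \<Rightarrow> real \<Rightarrow> real" where
  "I2 \<alpha> \<beta> = integral {0..\<alpha>}
     (\<lambda>t. sqrt ((cos \<alpha> - cos \<beta>) / (cos t - cos \<alpha>)) / (cos t - cos \<beta>))"

end

theory Submission
  imports Defs
begin


lemma cos_lower:
  fixes a :: real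
  assumes a0: "0 < a" and a1: "a \<le> pi/2"
  shows "\<exists>m>0. \<forall>t\<in>{0..a}. m * (a - t) \<le> cos t - cos a"
proof -
  define m where "m = min (sin (a/2)) ((cos (a/2) - cos a) / a)"
  have s: "0 < sin (a/2)" using a0 a1 by (intro sin_gt_zero) auto
  have c: "cos a < cos (a/2)" using a0 a1 by (intro cos_monotone_0_pi) auto
  have mpos: "m > 0" using s c a0 by (simp add: m_def)
  have "m * (a - t) \<le> cos t - cos a" if t: "0 \<le> t" "t \<le> a" for t
  proof (cases "t \<le> a/2")
    case True
    have "cos (a/2) \<le> cos t" using t True a1 by (intro cos_monotone_0_pi_le) auto
    moreover have "m * (a - t) \<le> ((cos (a/2) - cos a) / a) * a"
      using mpos t a0 by (intro mult_mono) (auto simp: m_def)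
    ultimately show ?thesis using a0 by simp
  next
    case False
    show ?thesis
    proof (cases "t = a")
      case True then show ?thesis by simp
    next
      case ne: False
      with t have "t < a" by simp
      from MVT2[OF this DERIV_cos] obtain z where z: "t < z" "z < a" "cos a - cos t = (a - t) * - sin z"
        by auto
      have "sin (a/2) \<le> sin z" using z False a1 by (intro sin_monotone_2pi_le) auto
      hence "m \<le> sin z" by (simp add: m_def)
      hence "m * (a - t) \<le> sin z * (a - t)" using t by (intro mult_right_mono) auto
      then show ?thesis using z(3) by (simp add: algebra_simps)
    qed
  qed
  with mpos show ?thesis by auto
qed



definition gg :: "real \<Rightarrow> real \<Rightarrow> real \<Rightarrow> real" where
  "gg a y t = sqrt (cos t - cos a) / (cos t - y)"
definition kk :: "real \<Rightarrow> real \<Rightarrow> real" where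
  "kk a t = 1 / sqrt (cos t - cos a)"

lemma cos_ge_on:
  fixes a t :: real
  assumes "0 \<le> t" "t \<le> a" "a \<le> pi/2"
  shows "cos a \<le> cos t"
  using assms by (intro cos_monotone_0_pi_le) auto

lemma gg_cont:
  assumes "0 < a" "a \<le> pi/2" "y < cos a"
  shows "continuous_on {0..a} (gg a y)"
proof -
  have "\<forall>t\<in>{0..a}. cos t - y \<noteq> 0" using cos_ge_on[of _ a] assms by force
  then show ?thesis unfolding gg_def by (intro continuous_intros) auto
qed

lemma gg_int:
  assumes "0 < a" "a \<le> pi/2" "y < cos a"
  shows "gg a y integrable_on {0..a}"
  using gg_cont[OF assms] integrable_continuous_interval by blast

lemma gg_nonneg:
  assumes "0 < a" "a \<le> pi/2" "y < cos a" "t \<in> {0..a}"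
  shows "0 \<le> gg a y t"
  using cos_ge_on[of t a] assms unfolding gg_def by auto

lemma gg_mono:
  assumes "0 < a" "a \<le> pi/2" "y1 \<le> y2" "y2 < cos a" "t \<in> {0..a}"
  shows "gg a y1 t \<le> gg a y2 t"
  using cos_ge_on[of t a] assms unfolding gg_def
  by (intro divide_left_mono) (auto intro: mult_pos_pos)

lemma gg_le_kk:
  assumes "0 < a" "a \<le> pi/2" "y < cos a" "t \<in> {0..a}"
  shows "gg a y t \<le> kk a t"
proof -
  define x where "x = cos t - cos a"
  have x0: "0 \<le> x" using cos_ge_on[of t a] assms by (auto simp: x_def)
  show ?thesis
  proof (cases "x = 0")
    case True then show ?thesis by (simp add: gg_def kk_def x_def)
  next
    case False
    hence xp: "x > 0" using x0 by simp
    have "gg a y t = sqrt x / (x + (cos a - y))" by (simp add: gg_def x_def)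
    also have "\<dots> \<le> sqrt x / x" using xp assms by (intro divide_left_mono) auto
    also have "\<dots> = 1 / sqrt x"
    proof -
      have "sqrt x * sqrt x = x" using xp by simp
      moreover have "sqrt x > 0" using xp by simp
      ultimately show ?thesis using xp by (simp add: field_simps)
    qed
    finally show ?thesis by (simp add: kk_def x_def)
  qed
qed

lemma inv_sqrt_has_integral:
  fixes a C :: real
  assumes "0 < a"
  shows "((\<lambda>t. C / sqrt (a - t)) has_integral (2 * C * sqrt a)) {0..a}"
proof -
  have "((\<lambda>t. C / sqrt (a - t)) has_integral ((-2*C* sqrt (a - a)) - (-2*C* sqrt (a - 0)))) {0..a}"
  proof (rule fundamental_theorem_of_calculus_interior)
    show "continuous_on {0..a} (\<lambda>t. -2*C* sqrt (a - t))" by (intro continuous_intros)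
    fix t assume t: "t \<in> {0<..<a}"
    have "((\<lambda>t. -2*C* sqrt (a - t)) has_real_derivative C / sqrt (a - t)) (at t)"
      using t by (auto intro!: derivative_eq_intros simp: field_simps)
    then show "((\<lambda>t. -2*C* sqrt (a - t)) has_vector_derivative C / sqrt (a - t)) (at t)"
      by (simp add: has_real_derivative_iff_has_vector_derivative)
  qed (use assms in auto)
  then show ?thesis by simp
qed

lemma kk_le_bound:
  assumes "0 < a" "a \<le> pi/2" "m > 0" "\<forall>t\<in>{0..a}. m * (a - t) \<le> cos t - cos a" "t \<in> {0..a}"
  shows "kk a t \<le> (1 / sqrt m) / sqrt (a - t)"
proof (cases "t = a")
  case True then show ?thesis by (simp add: kk_def)
next
  case False
  hence "a - t > 0" using assms by auto
  hence p: "m * (a - t) > 0" using assms by simp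
  have "sqrt (m * (a - t)) \<le> sqrt (cos t - cos a)" using assms by auto
  hence "1 / sqrt (cos t - cos a) \<le> 1 / sqrt (m * (a - t))"
    using p by (intro divide_left_mono) auto
  then show ?thesis by (simp add: kk_def real_sqrt_mult)
qed



definition GG :: "real \<Rightarrow> real \<Rightarrow> real" where
  "GG a y = integral {0..a} (gg a y)"
definition KK :: "real \<Rightarrow> real" where
  "KK a = integral {0..a} (kk a)"

lemma kk_conv:
  assumes a0: "0 < a" and a1: "a \<le> pi/2"
  shows "kk a integrable_on {0..a} \<and> (\<lambda>n. GG a (cos a - 1 / real (Suc n))) \<longlonglongrightarrow> KK a"
proof -
  obtain m where m: "m > 0" "\<forall>t\<in>{0..a}. m * (a - t) \<le> cos t - cos a"
    using cos_lower[OF a0 a1] by blast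
  define C where "C = 1 / sqrt m"
  define f where "f n = gg a (cos a - 1 / real (Suc n))" for n
  have hint: "(\<lambda>t. C / sqrt (a - t)) integrable_on {0..a}"
    using inv_sqrt_has_integral[OF a0] by blast
  have fint: "f n integrable_on {0..a}" for n
    unfolding f_def using a0 a1 by (intro gg_int) auto
  have "kk a integrable_on {0..a} \<and> (\<lambda>n. integral {0..a} (f n)) \<longlonglongrightarrow> integral {0..a} (kk a)"
  proof (rule monotone_convergence_increasing)
    show "f n integrable_on {0..a}" for n by (rule fint)
    show "f n t \<le> f (Suc n) t" if "t \<in> {0..a}" for n t
    proof -
      have "1 / real (Suc (Suc n)) \<le> 1 / real (Suc n)" by (simp add: frac_le)
      then show ?thesis unfolding f_def using a0 a1 that by (intro gg_mono) auto
    qed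
    show "(\<lambda>n. f n t) \<longlonglongrightarrow> kk a t" if t: "t \<in> {0..a}" for t
    proof (cases "cos t - cos a = 0")
      case True then show ?thesis by (simp add: f_def gg_def kk_def)
    next
      case False
      define x where "x = cos t - cos a"
      have xp: "x > 0" using False cos_ge_on[of t a] t a1 by (auto simp: x_def)
      have l: "(\<lambda>n. 1 / real (Suc n)) \<longlonglongrightarrow> 0"
        using LIMSEQ_inverse_real_of_nat by (simp add: inverse_eq_divide)
      have "(\<lambda>n. sqrt x / (x + 1 / real (Suc n))) \<longlonglongrightarrow> sqrt x / (x + 0)"
        using xp by (intro tendsto_intros l) auto
      moreover have "sqrt x / (x + 0) = kk a t"
      proof -
        have "sqrt x * sqrt x = x" using xp by simp
        moreover have "sqrt x > 0" using xp by simp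
        ultimately show ?thesis using xp by (simp add: kk_def x_def[symmetric] field_simps)
      qed
      moreover have "f n t = sqrt x / (x + 1 / real (Suc n))" for n
        by (simp add: f_def gg_def x_def)
      ultimately show ?thesis by simp
    qed
    show "bounded (range (\<lambda>n. integral {0..a} (f n)))"
      unfolding bounded_iff
    proof (intro exI ballI)
      fix z assume "z \<in> range (\<lambda>n. integral {0..a} (f n))"
      then obtain n where z: "z = integral {0..a} (f n)" by auto
      have fn0: "\<forall>t\<in>{0..a}. 0 \<le> f n t" unfolding f_def using a0 a1 by (auto intro!: gg_nonneg)
      have "0 \<le> z" unfolding z using fn0 fint by (intro integral_nonneg) auto
      moreover have "z \<le> integral {0..a} (\<lambda>t. C / sqrt (a - t))"
        unfolding z
      proof (rule integral_le[OF fint hint])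
        fix t assume t: "t \<in> {0..a}"
        have "f n t \<le> kk a t" unfolding f_def using a0 a1 t by (intro gg_le_kk) auto
        also have "\<dots> \<le> C / sqrt (a - t)" unfolding C_def using kk_le_bound[OF a0 a1 m t] .
        finally show "f n t \<le> C / sqrt (a - t)" .
      qed
      ultimately show "norm z \<le> integral {0..a} (\<lambda>t. C / sqrt (a - t))" by simp
    qed
  qed
  then show ?thesis by (simp add: GG_def KK_def f_def)
qed

lemma GG_le_KK:
  assumes a0: "0 < a" and a1: "a \<le> pi/2" and y: "y < cos a"
  shows "GG a y \<le> KK a"
  unfolding GG_def KK_def
  using kk_conv[OF a0 a1] gg_int[OF a0 a1 y] gg_le_kk[OF a0 a1 y]
  by (intro integral_le) auto

lemma GG_nonneg:
  assumes a0: "0 < a" and a1: "a \<le> pi/2" and y: "y < cos a"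
  shows "0 \<le> GG a y"
  unfolding GG_def
  using gg_int[OF a0 a1 y] gg_nonneg[OF a0 a1 y] by (intro integral_nonneg) auto



lemma lin_has_integral:
  fixes a L :: real
  assumes "0 < a"
  shows "((\<lambda>t. L * (a - t)) has_integral (L * a^2 / 2)) {0..a}"
proof -
  have "((\<lambda>t. L * (a - t)) has_integral ((L * (a*a - a^2/2)) - (L * (a*0 - 0^2/2)))) {0..a}"
  proof (rule fundamental_theorem_of_calculus_interior)
    show "continuous_on {0..a} (\<lambda>t. L * (a*t - t^2/2))" by (intro continuous_intros) auto
    fix t assume t: "t \<in> {0<..<a}"
    have "((\<lambda>t. L * (a*t - t^2/2)) has_real_derivative L * (a - t)) (at t)"
      by (auto intro!: derivative_eq_intros simp: field_simps)
    then show "((\<lambda>t. L * (a*t - t^2/2)) has_vector_derivative L * (a - t)) (at t)"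
      by (simp add: has_real_derivative_iff_has_vector_derivative)
  qed (use assms in auto)
  then show ?thesis by (simp add: power2_eq_square field_simps)
qed

lemma GG_strict:
  assumes a0: "0 < a" and a1: "a \<le> pi/2" and y: "y1 < y2" "y2 < cos a"
  shows "GG a y1 < GG a y2"
proof -
  obtain m where m: "m > 0" "\<forall>t\<in>{0..a}. m * (a - t) \<le> cos t - cos a"
    using cos_lower[OF a0 a1] by blast
  have ca1: "cos a \<le> 1" by simp
  define L where "L = (y2 - y1) / ((1 - y1) * (1 - y2)) * m"
  have y1: "y1 < 1" "y2 < 1" using y cos_le_one[of a] by linarith+
  have Lp: "L > 0" unfolding L_def using y y1 m by (intro mult_pos_pos divide_pos_pos) auto
  have lam: "0 \<le> (y2 - y1) / ((1 - y1) * (1 - y2))" using y y1 by (intro divide_nonneg_pos mult_pos_pos) auto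
  have i1: "gg a y1 integrable_on {0..a}" using a0 a1 y by (intro gg_int) auto
  have i2: "gg a y2 integrable_on {0..a}" using a0 a1 y by (intro gg_int) auto
  have "L * a^2 / 2 = integral {0..a} (\<lambda>t. L * (a - t))"
    using lin_has_integral[OF a0, of L] by (rule integral_unique[symmetric])
  also have "\<dots> \<le> integral {0..a} (\<lambda>t. gg a y2 t - gg a y1 t)"
  proof (rule integral_le)
    show "(\<lambda>t. L * (a - t)) integrable_on {0..a}" using lin_has_integral[OF a0] by blast
    show "(\<lambda>t. gg a y2 t - gg a y1 t) integrable_on {0..a}" by (rule integrable_diff[OF i2 i1])
    fix t assume t: "t \<in> {0..a}"
    define x where "x = cos t - cos a"
    have x0: "0 \<le> x" using cos_ge_on[of t a] t a1 by (auto simp: x_def)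
    have ca0: "0 \<le> cos a" using a0 a1 by (intro cos_ge_zero) auto
    have x1: "x \<le> 1" using ca0 cos_le_one[of t] unfolding x_def by linarith
    have c1: "cos t \<le> 1" by simp
    have d1: "cos t - y1 > 0" "cos t - y2 > 0" using x0 y by (auto simp: x_def)
    have "x \<le> sqrt x"
    proof -
      have "sqrt x * sqrt x = x" using x0 by simp
      moreover have "sqrt x \<le> 1" using x1 by simp
      moreover have "0 \<le> sqrt x" using x0 by simp
      ultimately show ?thesis by (metis mult_left_le mult.commute)
    qed
    have den: "(cos t - y1) * (cos t - y2) \<le> (1 - y1) * (1 - y2)"
      using d1 c1 y1 by (intro mult_mono) auto
    have dp: "(cos t - y1) * (cos t - y2) > 0" using d1 by simp
    have eq: "gg a y2 t - gg a y1 t = sqrt x * (y2 - y1) / ((cos t - y1) * (cos t - y2))"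
      using d1 by (simp add: gg_def x_def field_simps)
    have "L * (a - t) = (y2 - y1) / ((1 - y1) * (1 - y2)) * (m * (a - t))" by (simp add: L_def)
    also have "\<dots> \<le> (y2 - y1) / ((1 - y1) * (1 - y2)) * x"
      using m t lam by (intro mult_left_mono) (auto simp: x_def)
    also have "\<dots> \<le> (y2 - y1) / ((1 - y1) * (1 - y2)) * sqrt x"
      using \<open>x \<le> sqrt x\<close> lam by (intro mult_left_mono) auto
    also have "\<dots> = sqrt x * (y2 - y1) / ((1 - y1) * (1 - y2))" by simp
    also have "\<dots> \<le> sqrt x * (y2 - y1) / ((cos t - y1) * (cos t - y2))"
      using den dp y x0 by (intro divide_left_mono) auto
    finally show "L * (a - t) \<le> gg a y2 t - gg a y1 t" using eq by simp
  qed
  also have "\<dots> = GG a y2 - GG a y1" unfolding GG_def by (rule integral_diff[OF i2 i1])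
  finally show ?thesis using Lp a0 by (smt (verit) zero_less_power divide_pos_pos mult_pos_pos)
qed

lemma GG_cont:
  assumes a0: "0 < a" and a1: "a \<le> pi/2"
  shows "continuous_on {..<cos a} (GG a)"
proof -
  have "continuous_on ({..<cos a} \<times> cbox 0 a) (\<lambda>(y, t). gg a y t)"
  proof -
    have "\<forall>p\<in>{..<cos a} \<times> cbox 0 a. cos (snd p) - fst p \<noteq> 0"
      using cos_ge_on[of _ a] a1 by force
    then have "continuous_on ({..<cos a} \<times> cbox 0 a) (\<lambda>p. sqrt (cos (snd p) - cos a) / (cos (snd p) - fst p))"
      by (intro continuous_intros) auto
    then show ?thesis by (simp add: gg_def case_prod_unfold)
  qed
  from integral_continuous_on_param[OF this] show ?thesis
    by (simp add: GG_def box_real(2))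
qed

lemma sin_lt_self: "0 < (a::real) \<Longrightarrow> sin a < a"
proof -
  assume a: "0 < a"
  from MVT2[OF a DERIV_sin] obtain z where z: "0 < z" "z < a" "sin a - sin 0 = (a - 0) * cos z" by auto
  show ?thesis
  proof (cases "z \<le> pi")
    case True
    hence "cos z < cos 0" using z by (intro cos_monotone_0_pi) auto
    hence "a * cos z < a * 1" using a by (intro mult_strict_left_mono) auto
    then show ?thesis using z by simp
  next
    case False
    hence "a > pi" using z by simp
    moreover have "sin a \<le> 1" by simp
    moreover have "pi > 3" using pi_gt3 .
    ultimately show ?thesis by linarith
  qed
qed

lemma GG_minus1:
  assumes a0: "0 < a" and a1: "a \<le> pi/2"
  shows "2 * GG a (-1) < KK a"
proof -
  have ca0: "0 \<le> cos a" using a0 a1 by (intro cos_ge_zero) auto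
  have ym: "-1 < cos a" using ca0 by simp
  have ik: "kk a integrable_on {0..a}" using kk_conv[OF a0 a1] by blast
  have ig: "gg a (-1) integrable_on {0..a}" using gg_int[OF a0 a1 ym] .
  define h where "h t = kk a t - 2 * gg a (-1) t" for t
  have ih: "h integrable_on {0..a}" unfolding h_def using ik ig by (intro integrable_diff integrable_cmul) auto
  define h' where "h' t = (if t = a then (1 - cos a) / 2 else h t)" for t
  have ih': "h' integrable_on {0..a}"
    using ih unfolding h'_def by (rule integrable_spike[where S="{a}"]) auto
  have "integral {0..a} h = integral {0..a} h'"
    by (rule integral_spike[where S="{a}"]) (auto simp: h'_def)
  have cint: "((\<lambda>t. (1 - cos t) / 2) has_integral ((a - sin a) / 2 - (0 - sin 0) / 2)) {0..a}"
  proof (rule fundamental_theorem_of_calculus_interior)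
    show "continuous_on {0..a} (\<lambda>t. (t - sin t) / 2)" by (intro continuous_intros) auto
    fix t assume t: "t \<in> {0<..<a}"
    have "((\<lambda>t. (t - sin t) / 2) has_real_derivative (1 - cos t) / 2) (at t)"
      by (auto intro!: derivative_eq_intros)
    then show "((\<lambda>t. (t - sin t) / 2) has_vector_derivative (1 - cos t) / 2) (at t)"
      by (simp add: has_real_derivative_iff_has_vector_derivative)
  qed (use a0 in auto)
  have "0 < (a - sin a) / 2" using sin_lt_self[OF a0] by simp
  also have "\<dots> = integral {0..a} (\<lambda>t. (1 - cos t) / 2)"
  proof -
    have "((\<lambda>t. (1 - cos t) / 2) has_integral (a - sin a) / 2) {0..a}" using cint by simp
    then show ?thesis by (rule integral_unique[symmetric])
  qed
  also have "\<dots> \<le> integral {0..a} h'"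
  proof (rule integral_le)
    show "(\<lambda>t. (1 - cos t) / 2) integrable_on {0..a}" using cint by blast
    show "h' integrable_on {0..a}" by (rule ih')
    fix t assume t: "t \<in> {0..a}"
    show "(1 - cos t) / 2 \<le> h' t"
    proof (cases "t = a")
      case True then show ?thesis by (simp add: h'_def)
    next
      case False
      define x where "x = cos t - cos a"
      have "cos a < cos t" using False t a1 by (intro cos_monotone_0_pi) auto
      hence xp: "0 < x" by (simp add: x_def)
      have x1: "x \<le> 1" using ca0 cos_le_one[of t] unfolding x_def by linarith
      have sx: "0 < sqrt x" "sqrt x \<le> 1" "sqrt x * sqrt x = x" using xp x1 by auto
      have c1: "cos t \<le> 1" by simp
      have cp: "cos t + 1 > 0" using ca0 \<open>cos a < cos t\<close> by simp
      have eq: "h t = (1 + 2 * cos a - cos t) / ((cos t + 1) * sqrt x)"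
        using sx cp by (simp add: h_def kk_def gg_def x_def[symmetric] field_simps)
           (simp add: x_def algebra_simps)
      have num: "1 - cos t \<le> 1 + 2 * cos a - cos t" using ca0 by simp
      have "(cos t + 1) * sqrt x \<le> 2 * 1" using sx c1 cp by (intro mult_mono) auto
      hence den: "(cos t + 1) * sqrt x \<le> 2" by simp
      have dp: "0 < (cos t + 1) * sqrt x" using sx cp by simp
      have "(1 - cos t) / 2 \<le> (1 - cos t) / ((cos t + 1) * sqrt x)"
        using den dp c1 by (intro divide_left_mono) auto
      also have "\<dots> \<le> (1 + 2 * cos a - cos t) / ((cos t + 1) * sqrt x)"
        using num dp by (intro divide_right_mono) auto
      finally show ?thesis using eq False by (simp add: h'_def)
    qed
  qed
  also have "\<dots> = integral {0..a} h" using \<open>integral {0..a} h = integral {0..a} h'\<close> by simp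
  also have "\<dots> = KK a - 2 * GG a (-1)"
    unfolding h_def KK_def GG_def using ik ig
    by (simp add: integral_diff integrable_cmul)
  finally show ?thesis by simp
qed



lemma alg_id: "(u::real) > 0 \<Longrightarrow> v > 0 \<Longrightarrow> v / u / (u^2 + v^2) = (1/v) * (1/u - u/(u^2+v^2))"
  by (simp add: field_simps power2_eq_square)

lemma I_rel:
  assumes a0: "0 < a" and a1: "a \<le> pi/2" and b: "a < b" "b < pi"
  shows "I1 a b = GG a (cos b) / sqrt (cos a - cos b)
       \<and> I2 a b = (KK a - GG a (cos b)) / sqrt (cos a - cos b)"
proof -
  have yl: "cos b < cos a" using a0 b by (intro cos_monotone_0_pi) auto
  define d where "d = cos a - cos b"
  have dp: "d > 0" using yl by (simp add: d_def)
  have ik: "kk a integrable_on {0..a}" using kk_conv[OF a0 a1] by blast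
  have ig: "gg a (cos b) integrable_on {0..a}" using gg_int[OF a0 a1 yl] .
  have "I1 a b = integral {0..a} (\<lambda>t. (1 / sqrt d) * gg a (cos b) t)"
    unfolding I1_def d_def gg_def by (simp add: real_sqrt_divide)
  also have "\<dots> = GG a (cos b) / sqrt d" by (simp add: GG_def)
  finally have 1: "I1 a b = GG a (cos b) / sqrt d" .
  have "I2 a b = integral {0..a} (\<lambda>t. (1 / sqrt d) * (kk a t - gg a (cos b) t))"
    unfolding I2_def
  proof (rule integral_cong)
    fix t assume t: "t \<in> {0..a}"
    define x where "x = cos t - cos a"
    have x0: "0 \<le> x" using cos_ge_on[of t a] t a1 by (auto simp: x_def)
    show "sqrt ((cos a - cos b) / (cos t - cos a)) / (cos t - cos b) =
          1 / sqrt d * (kk a t - gg a (cos b) t)"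
    proof (cases "x = 0")
      case True
      then show ?thesis by (simp add: kk_def gg_def x_def[symmetric])
    next
      case False
      hence xp: "x > 0" using x0 by simp
      have e1: "cos t - cos b = (sqrt x)^2 + (sqrt d)^2" using xp dp by (simp add: x_def d_def)
      have "sqrt ((cos a - cos b) / (cos t - cos a)) / (cos t - cos b) = sqrt (d / x) / ((sqrt x)^2 + (sqrt d)^2)"
        by (simp only: e1 d_def x_def)
      also have "\<dots> = sqrt d / sqrt x / ((sqrt x)^2 + (sqrt d)^2)"
        by (subst real_sqrt_divide) (rule refl)
      also have "\<dots> = (1/sqrt d) * (1/sqrt x - sqrt x/((sqrt x)^2+(sqrt d)^2))"
        using xp dp by (intro alg_id) auto
      also have "\<dots> = 1 / sqrt d * (kk a t - gg a (cos b) t)"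
        by (simp only: kk_def gg_def e1 x_def)
      finally show ?thesis .
    qed
  qed
  also have "\<dots> = (KK a - GG a (cos b)) / sqrt d"
    using ik ig by (simp add: integral_diff GG_def KK_def)
  finally show ?thesis using 1 by (simp add: d_def)
qed



theorem mainTheorem4:
  fixes \<alpha> :: real
  assumes "0 < \<alpha>" and "\<alpha> \<le> pi / 2"
  shows "(\<forall>\<beta>1\<in>{\<alpha><..<pi}. \<forall>\<beta>2\<in>{\<alpha><..<pi}. \<beta>1 < \<beta>2 \<longrightarrow>
            sqrt (cos \<alpha> - cos \<beta>2) * I1 \<alpha> \<beta>2 < sqrt (cos \<alpha> - cos \<beta>1) * I1 \<alpha> \<beta>1)
       \<and> (\<forall>\<beta>1\<in>{\<alpha><..<pi}. \<forall>\<beta>2\<in>{\<alpha><..<pi}. \<beta>1 < \<beta>2 \<longrightarrow>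
            sqrt (cos \<alpha> - cos \<beta>1) * I2 \<alpha> \<beta>1 < sqrt (cos \<alpha> - cos \<beta>2) * I2 \<alpha> \<beta>2)
       \<and> (\<forall>\<^sub>F \<beta> in at_right \<alpha>. I1 \<alpha> \<beta> > I2 \<alpha> \<beta>)
       \<and> (\<forall>\<^sub>F \<beta> in at_left pi. I1 \<alpha> \<beta> < I2 \<alpha> \<beta>)
       \<and> (\<exists>!\<beta>. \<beta> \<in> {\<alpha><..<pi} \<and> I1 \<alpha> \<beta> = I2 \<alpha> \<beta>)"
proof -
  note a0 = assms(1) and a1 = assms(2)
  define a where "a = \<alpha>"
  have a0': "0 < a" and a1': "a \<le> pi/2" using a0 a1 by (auto simp: a_def)
  define F where "F b = GG a (cos b)" for b
  have apos: "a < pi" using a1' pi_gt_zero by linarith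
  have cb: "cos b < cos a" if "b \<in> {a<..<pi}" for b using that a0' by (intro cos_monotone_0_pi) auto
  have sq: "sqrt (cos a - cos b) > 0" if "b \<in> {a<..<pi}" for b using cb[OF that] by simp
  have rel: "I1 a b = F b / sqrt (cos a - cos b) \<and> I2 a b = (KK a - F b) / sqrt (cos a - cos b)"
    if "b \<in> {a<..<pi}" for b using I_rel[OF a0' a1'] that by (auto simp: F_def)
  have r1: "sqrt (cos a - cos b) * I1 a b = F b" if "b \<in> {a<..<pi}" for b
    using rel[OF that] sq[OF that] by simp
  have r2: "sqrt (cos a - cos b) * I2 a b = KK a - F b" if "b \<in> {a<..<pi}" for b
    using rel[OF that] sq[OF that] by simp
  have gt_iff: "I1 a b > I2 a b \<longleftrightarrow> KK a < 2 * F b" if "b \<in> {a<..<pi}" for b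
  proof -
    have "I1 a b > I2 a b \<longleftrightarrow> (KK a - F b) / sqrt (cos a - cos b) < F b / sqrt (cos a - cos b)"
      using rel[OF that] by simp
    also have "\<dots> \<longleftrightarrow> KK a - F b < F b" using sq[OF that] by (simp add: divide_less_cancel)
    finally show ?thesis by linarith
  qed
  have lt_iff: "I1 a b < I2 a b \<longleftrightarrow> 2 * F b < KK a" if "b \<in> {a<..<pi}" for b
  proof -
    have "I1 a b < I2 a b \<longleftrightarrow> F b / sqrt (cos a - cos b) < (KK a - F b) / sqrt (cos a - cos b)"
      using rel[OF that] by simp
    also have "\<dots> \<longleftrightarrow> F b < KK a - F b" using sq[OF that] by (simp add: divide_less_cancel)
    finally show ?thesis by linarith
  qed
  have eq_iff: "I1 a b = I2 a b \<longleftrightarrow> 2 * F b = KK a" if "b \<in> {a<..<pi}" for b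
  proof -
    have "I1 a b = I2 a b \<longleftrightarrow> F b / sqrt (cos a - cos b) = (KK a - F b) / sqrt (cos a - cos b)"
      using rel[OF that] by simp
    also have "\<dots> \<longleftrightarrow> F b = KK a - F b" using sq[OF that] by (simp add: divide_cancel_right)
    finally show ?thesis by linarith
  qed
  have Fdec: "F b2 < F b1" if "b1 \<in> {a<..<pi}" "b2 \<in> {a<..<pi}" "b1 < b2" for b1 b2
  proof -
    have "cos b2 < cos b1" using that a0' by (intro cos_monotone_0_pi) auto
    then show ?thesis unfolding F_def using GG_strict[OF a0' a1'] cb[OF that(1)] by blast
  qed
  have c1: "\<forall>b1\<in>{a<..<pi}. \<forall>b2\<in>{a<..<pi}. b1 < b2 \<longrightarrow>
            sqrt (cos a - cos b2) * I1 a b2 < sqrt (cos a - cos b1) * I1 a b1"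
    using r1 Fdec by auto
  have c2: "\<forall>b1\<in>{a<..<pi}. \<forall>b2\<in>{a<..<pi}. b1 < b2 \<longrightarrow>
            sqrt (cos a - cos b1) * I2 a b1 < sqrt (cos a - cos b2) * I2 a b2"
    using r2 Fdec by (auto simp del: )
  have Kp: "KK a > 0"
  proof -
    have "GG a (cos a - 2) < GG a (cos a - 1)" using GG_strict[OF a0' a1'] by simp
    moreover have "0 \<le> GG a (cos a - 2)" using GG_nonneg[OF a0' a1'] by simp
    moreover have "GG a (cos a - 1) \<le> KK a" using GG_le_KK[OF a0' a1'] by simp
    ultimately show ?thesis by linarith
  qed
  have c3: "\<forall>\<^sub>F b in at_right a. KK a < 2 * F b \<and> b \<in> {a<..<pi}"
  proof -
    have lim: "(\<lambda>n. GG a (cos a - 1 / real (Suc n))) \<longlonglongrightarrow> KK a" using kk_conv[OF a0' a1'] by blast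
    have "KK a / 2 < KK a" using Kp by simp
    from order_tendstoD(1)[OF lim this] obtain N where
      N: "KK a / 2 < GG a (cos a - 1 / real (Suc N))"
      unfolding eventually_sequentially by auto
    define y0 where "y0 = cos a - 1 / real (Suc N)"
    have y0: "y0 < cos a" by (simp add: y0_def)
    have "(cos \<longlongrightarrow> cos a) (at_right a)"
      by (intro tendsto_intros) 
    from order_tendstoD(1)[OF this y0] have ev1: "\<forall>\<^sub>F b in at_right a. y0 < cos b" .
    have ev2: "\<forall>\<^sub>F b in at_right a. b \<in> {a<..<pi}" using eventually_at_right_real[OF apos] .
    show ?thesis using ev1 ev2
    proof eventually_elim
      case (elim b)
      have "GG a y0 \<le> GG a (cos b)"
      proof (cases "y0 = cos b")
        case True then show ?thesis by simp
      next
        case False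
        then show ?thesis using GG_strict[OF a0' a1' _ cb[OF elim(2)]] elim(1) by force
      qed
      then show ?case using N elim(2) by (simp add: F_def y0_def)
    qed
  qed
  have c4: "\<forall>\<^sub>F b in at_left pi. 2 * F b < KK a \<and> b \<in> {a<..<pi}"
  proof -
    have ym: "-1 < cos a" using cos_ge_zero[of a] a0' a1' by simp
    have "isCont (GG a) (-1)"
      using GG_cont[OF a0' a1'] ym continuous_on_eq_continuous_at[of "{..<cos a}" "GG a"] by auto
    moreover have "(cos \<longlongrightarrow> -1) (at_left pi)"
    proof -
      have "(cos \<longlongrightarrow> cos pi) (at_left pi)" by (intro tendsto_intros)
      then show ?thesis by simp
    qed
    ultimately have "((\<lambda>b. GG a (cos b)) \<longlongrightarrow> GG a (-1)) (at_left pi)"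
      by (rule isCont_tendsto_compose)
    moreover have "GG a (-1) < KK a / 2" using GG_minus1[OF a0' a1'] by simp
    ultimately have ev1: "\<forall>\<^sub>F b in at_left pi. GG a (cos b) < KK a / 2" by (rule order_tendstoD(2))
    have ev2: "\<forall>\<^sub>F b in at_left pi. b \<in> {a<..<pi}" using eventually_at_left_real[OF apos] .
    show ?thesis using ev1 ev2 by eventually_elim (auto simp: F_def)
  qed
  have c5: "\<exists>!b. b \<in> {a<..<pi} \<and> I1 a b = I2 a b"
  proof -
    define mid where "mid = (a + pi) / 2"
    have mid: "a < mid" "mid < pi" using apos by (auto simp: mid_def)
    have "\<forall>\<^sub>F b in at_right a. (KK a < 2 * F b \<and> b \<in> {a<..<pi}) \<and> b \<in> {a<..<mid}"
      using c3 eventually_at_right_real[OF mid(1)] by (rule eventually_conj)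
    then obtain ba where ba: "KK a < 2 * F ba" "ba \<in> {a<..<pi}" "ba < mid"
      using eventually_happens'[OF trivial_limit_at_right_real] by force
    have "\<forall>\<^sub>F b in at_left pi. (2 * F b < KK a \<and> b \<in> {a<..<pi}) \<and> b \<in> {mid<..<pi}"
      using c4 eventually_at_left_real[OF mid(2)] by (rule eventually_conj)
    then obtain bb where bb: "2 * F bb < KK a" "bb \<in> {a<..<pi}" "mid < bb"
      using eventually_happens'[OF trivial_limit_at_left_real] by force
    have sub: "{ba..bb} \<subseteq> {a<..<pi}" using ba bb by auto
    have cont: "continuous_on {ba..bb} F"
      unfolding F_def
    proof (rule continuous_on_compose2[OF GG_cont[OF a0' a1']])
      show "continuous_on {ba..bb} cos" by (intro continuous_intros)
      show "cos ` {ba..bb} \<subseteq> {..<cos a}" using sub cb by auto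
    qed
    obtain x where x: "ba \<le> x" "x \<le> bb" "F x = KK a / 2"
      using IVT2'[of F bb "KK a / 2" ba, OF _ _ _ cont] ba bb by auto
    have xin: "x \<in> {a<..<pi}" using x sub by auto
    show ?thesis
    proof (rule ex1I[of _ x])
      show "x \<in> {a<..<pi} \<and> I1 a x = I2 a x" using xin x eq_iff[OF xin] by simp
      fix z assume z: "z \<in> {a<..<pi} \<and> I1 a z = I2 a z"
      hence Fz: "F z = KK a / 2" using eq_iff by auto
      show "z = x"
      proof (rule ccontr)
        assume "z \<noteq> x"
        hence "z < x \<or> x < z" by auto
        then show False using Fdec[of z x] Fdec[of x z] z xin Fz x(3) by auto
      qed
    qed
  qed
  have c3': "\<forall>\<^sub>F b in at_right a. I1 a b > I2 a b"
    using c3 by eventually_elim (use gt_iff in auto)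
  have c4': "\<forall>\<^sub>F b in at_left pi. I1 a b < I2 a b"
    using c4 by eventually_elim (use lt_iff in auto)
  show ?thesis using c1 c2 c3' c4' c5 unfolding a_def by blast
qed

end
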